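(* Let $N\ge1$, $(T_N)_{jk}=\binom{j+k}{j}$, $(\Psi_N)_{jk}=\binom{j}{k}$ for $0\le j,k<N$, and $\Lambda_N=\mathrm{diag}(1,-1,\dots,(-1)^{N-1})$. If $\vec v$ is an eigenvector of $T_N$ with eigenvalue $\lambda$, then $\Psi_N\Lambda_N\vec v$ is an eigenvector of $T_N$ with eigenvalue $\lambda^{-1}$.
   Context: Matrix indices start at $0$. ($T_N=\Psi_N\Psi_N^\intercal$ is positive definite, so $\lambda\neq0$.) *)

theory Defs
  imports "Jordan_Normal_Form.Char_Poly"
begin

definition T_mat :: "nat \<Rightarrow> real mat" where
  "T_mat N = mat N N (\<lambda>(j,k). real ((j + k) choose j))"

definition Psi_mat :: "nat \<Rightarrow> real mat" where
  "Psi_mat N = mat N N (\<lambda>(j,k). real (j choose k))"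

definition Lambda_mat :: "nat \<Rightarrow> real mat" where
  "Lambda_mat N = mat N N (\<lambda>(j,k). if j = k then (-1) ^ j else 0)"

end

theory Submission imports Defs begin

lemma comb1:
  assumes "j < N"
  shows "(\<Sum>i<N. (j choose i) * (k choose i)) = (j + k) choose j"
proof -
  have "(\<Sum>i<N. (j choose i) * (k choose i)) = (\<Sum>i\<le>j. (j choose i) * (k choose i))"
    using assms by (intro sum.mono_neutral_right) auto
  also have "\<dots> = (\<Sum>i\<le>j. (k choose i) * (j choose (j - i)))"
    by (intro sum.cong refl) (simp add: binomial_symmetric[symmetric])
  also have "\<dots> = (k + j) choose j" by (rule vandermonde)
  finally show ?thesis by (simp add: add.commute)
qed

lemma comb2:
  assumes "j < N"
  shows "(\<Sum>i<N. real (j choose i) * (-1)^i * real (i choose k)) = (if j = k then (-1)^k else 0)"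
proof (cases "k \<le> j")
  case False
  have h: "real (j choose i) * (-1)^i * real (i choose k) = 0" for i
    using False by (cases "i \<le> j") auto
  have "(\<Sum>i<N. real (j choose i) * (-1)^i * real (i choose k)) = 0"
    by (rule sum.neutral) (use h in blast)
  then show ?thesis using False by simp
next
  case True
  have "(\<Sum>i<N. real (j choose i) * (-1)^i * real (i choose k))
      = (\<Sum>i\<in>{k..j}. real (j choose i) * (-1)^i * real (i choose k))"
    using assms by (intro sum.mono_neutral_right) auto
  also have "\<dots> = (\<Sum>l\<in>{0..j-k}. real (j choose (l+k)) * (-1)^(l+k) * real ((l+k) choose k))"
    using sum.shift_bounds_cl_nat_ivl[of "\<lambda>i. real (j choose i) * (-1)^i * real (i choose k)" 0 k "j-k"]
    using True by simp
  also have "\<dots> = (\<Sum>l\<le>j-k. real (j choose k) * (-1)^k * ((-1)^l * real ((j-k) choose l)))"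
  proof (intro sum.cong)
    fix l assume l: "l \<in> {..j-k}"
    have "(j choose (l+k)) * ((l+k) choose k) = (j choose k) * ((j - k) choose l)"
      using choose_mult[of k "l+k" j] l True by simp
    then have "real (j choose (l+k)) * real ((l+k) choose k) = real (j choose k) * real ((j - k) choose l)"
      by (metis of_nat_mult)
    then show "real (j choose (l+k)) * (-1)^(l+k) * real ((l+k) choose k) = real (j choose k) * (-1)^k * ((-1)^l * real ((j-k) choose l))"
      by (simp add: power_add algebra_simps)
  qed (auto simp: atLeast0AtMost)
  also have "\<dots> = real (j choose k) * (-1)^k * (\<Sum>l\<le>j-k. (-1)^l * real ((j-k) choose l))"
    by (simp add: sum_distrib_left)
  also have "\<dots> = (if j = k then (-1)^k else 0)"
  proof (cases "j = k")
    case True then show ?thesis by simp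
  next
    case False
    then have jk: "j - k > 0" using \<open>k \<le> j\<close> by simp
    have "(\<Sum>l\<le>j-k. (-1)^l * real ((j-k) choose l)) = 0"
      by (rule choose_alternating_sum[OF jk])
    with False show ?thesis by simp
  qed
  finally show ?thesis .
qed

lemma carr: "T_mat N \<in> carrier_mat N N" "Psi_mat N \<in> carrier_mat N N" "Lambda_mat N \<in> carrier_mat N N"
  by (auto simp: T_mat_def Psi_mat_def Lambda_mat_def)

lemma T_eq: "T_mat N = Psi_mat N * transpose_mat (Psi_mat N)"
proof (rule eq_matI)
  fix j k assume jk: "j < dim_row (Psi_mat N * transpose_mat (Psi_mat N))" "k < dim_col (Psi_mat N * transpose_mat (Psi_mat N))"
  then have j: "j < N" and k: "k < N" by (auto simp: Psi_mat_def)
  have "(Psi_mat N * transpose_mat (Psi_mat N)) $$ (j,k) = (\<Sum>i<N. real (j choose i) * real (k choose i))"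
    using j k by (simp add: Psi_mat_def scalar_prod_def atLeast0LessThan)
  also have "\<dots> = real ((j + k) choose j)"
    using comb1[OF j, of k] by (metis (no_types, lifting) of_nat_mult of_nat_sum sum.cong)
  finally show "T_mat N $$ (j,k) = (Psi_mat N * transpose_mat (Psi_mat N)) $$ (j,k)"
    using j k by (simp add: T_mat_def)
qed (auto simp: T_mat_def Psi_mat_def)

lemma SL_eq: "Psi_mat N * Lambda_mat N = mat N N (\<lambda>(j,k). real (j choose k) * (-1)^k)"
proof (rule eq_matI)
  fix j k assume "j < dim_row (mat N N (\<lambda>(j,k). real (j choose k) * (-1)^k))"
    "k < dim_col (mat N N (\<lambda>(j,k). real (j choose k) * (-1)^k))"
  then have j: "j < N" and k: "k < N" by auto
  have "(Psi_mat N * Lambda_mat N) $$ (j,k) = (\<Sum>i\<in>{0..<N}. real (j choose i) * (if i = k then (-1)^i else 0))"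
    using j k by (simp add: Psi_mat_def Lambda_mat_def scalar_prod_def)
  also have "\<dots> = (\<Sum>i\<in>{0..<N}. if i = k then real (j choose k) * (-1)^k else 0)"
    by (intro sum.cong) auto
  also have "\<dots> = real (j choose k) * (-1)^k" using k by (simp add: sum.delta)
  finally show "(Psi_mat N * Lambda_mat N) $$ (j,k) = mat N N (\<lambda>(j,k). real (j choose k) * (-1)^k) $$ (j,k)"
    using j k by simp
qed (auto simp: Psi_mat_def Lambda_mat_def)

lemma SLS: "Psi_mat N * Lambda_mat N * Psi_mat N = Lambda_mat N"
proof (rule eq_matI)
  fix j k assume "j < dim_row (Lambda_mat N)" "k < dim_col (Lambda_mat N)"
  then have j: "j < N" and k: "k < N" by (auto simp: Lambda_mat_def)
  have "(Psi_mat N * Lambda_mat N * Psi_mat N) $$ (j,k) = (\<Sum>i<N. real (j choose i) * (-1)^i * real (i choose k))"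
    unfolding SL_eq using j k by (simp add: Psi_mat_def scalar_prod_def atLeast0LessThan)
  also have "\<dots> = (if j = k then (-1)^k else 0)" by (rule comb2[OF j])
  finally show "(Psi_mat N * Lambda_mat N * Psi_mat N) $$ (j,k) = Lambda_mat N $$ (j,k)"
    using j k by (simp add: Lambda_mat_def)
qed (auto simp: Psi_mat_def Lambda_mat_def)

lemma LL: "Lambda_mat N * Lambda_mat N = 1\<^sub>m N"
proof (rule eq_matI)
  fix j k assume "j < dim_row (1\<^sub>m N :: real mat)" "k < dim_col (1\<^sub>m N :: real mat)"
  then have j: "j < N" and k: "k < N" by auto
  have "(Lambda_mat N * Lambda_mat N) $$ (j,k) = (\<Sum>i\<in>{0..<N}. (if j = i then (-1)^j else 0) * (if i = k then (-1)^i else 0 :: real))"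
    using j k by (simp add: Lambda_mat_def scalar_prod_def)
  also have "\<dots> = (\<Sum>i\<in>{0..<N}. if i = j then (if j = k then 1 else 0) else 0)"
    by (intro sum.cong) (auto simp: power_mult_distrib[symmetric])
  also have "\<dots> = (if j = k then 1 else 0)" using j by (simp add: sum.delta)
  finally show "(Lambda_mat N * Lambda_mat N) $$ (j,k) = (1\<^sub>m N :: real mat) $$ (j,k)"
    using j k by simp
qed (auto simp: Lambda_mat_def)

lemma LT: "transpose_mat (Lambda_mat N) = Lambda_mat N"
  by (rule eq_matI) (auto simp: Lambda_mat_def)

lemma key:
  fixes N :: nat
  defines "S \<equiv> Psi_mat N" and "L \<equiv> Lambda_mat N" and "T \<equiv> T_mat N"
  shows "(S * L) * (S * L) = 1\<^sub>m N" and "T * (S * L) * T = S * L"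
proof -
  have cS: "S \<in> carrier_mat N N" and cL: "L \<in> carrier_mat N N" and cT: "T \<in> carrier_mat N N"
    and cST: "transpose_mat S \<in> carrier_mat N N"
    using carr[of N] by (auto simp: S_def L_def T_def)
  have sls: "S * L * S = L" unfolding S_def L_def by (rule SLS)
  have sls': "S * (L * (S * X)) = L * X" if "X \<in> carrier_mat N n" for X n
  proof -
    have "(S * L * S) * X = (S * L) * (S * X)" using cS cL that by (meson assoc_mult_mat mult_carrier_mat)
    also have "\<dots> = S * (L * (S * X))" using cS cL that by (meson assoc_mult_mat mult_carrier_mat)
    finally have "S * (L * (S * X)) = (S * L * S) * X" by simp
    then show ?thesis using sls by simp
  qed
  show "(S * L) * (S * L) = 1\<^sub>m N"
  proof -
    have "(S * L * S) * L = (S * L) * (S * L)" using cS cL by (meson assoc_mult_mat mult_carrier_mat)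
    then have "(S * L) * (S * L) = (S * L * S) * L" by simp
    also have "\<dots> = 1\<^sub>m N" using sls LL[of N] by (simp add: L_def)
    finally show ?thesis .
  qed
  have tr: "transpose_mat S * (L * transpose_mat S) = L"
  proof -
    have "transpose_mat (S * L * S) = transpose_mat S * transpose_mat (S * L)"
      using cS cL by (intro transpose_mult) auto
    also have "\<dots> = transpose_mat S * (transpose_mat L * transpose_mat S)"
      using cS cL by (simp add: transpose_mult)
    also have "\<dots> = transpose_mat S * (L * transpose_mat S)" using LT[of N] by (simp add: L_def)
    finally show ?thesis using sls LT[of N] by (simp add: L_def)
  qed
  have "T * (S * L) * T = S * (transpose_mat S * (S * (L * (S * transpose_mat S))))"
    unfolding T_def T_eq[of N] S_def[symmetric] using cS cL cST
    by (simp add: assoc_mult_mat[where n\<^sub>1=N and n\<^sub>2=N and n\<^sub>3=N and n\<^sub>4=N])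
  also have "\<dots> = S * (transpose_mat S * (L * transpose_mat S))" using sls'[OF cST] by simp
  also have "\<dots> = S * L" using tr by simp
  finally show "T * (S * L) * T = S * L" .
qed

lemma mult_zero_vec': "A \<in> carrier_mat n m \<Longrightarrow> A *\<^sub>v 0\<^sub>v m = 0\<^sub>v n"
  by (intro eq_vecI) (auto simp: row_def)

theorem mainTheorem11:
  fixes N :: nat and v :: "real vec" and lam :: real
  assumes "N \<ge> 1"
    and "eigenvector (T_mat N) v lam"
  shows "eigenvector (T_mat N) ((Psi_mat N * Lambda_mat N) *\<^sub>v v) (inverse lam)"
proof -
  define P where "P = Psi_mat N * Lambda_mat N"
  define T where "T = T_mat N"
  have cT: "T \<in> carrier_mat N N" using carr[of N] by (simp add: T_def)
  have cP: "P \<in> carrier_mat N N" using carr[of N] by (simp add: P_def)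
  have PP: "P * P = 1\<^sub>m N" and TPT: "T * P * T = P" using key[of N] by (simp_all add: P_def T_def)
  from assms(2) have v: "v \<in> carrier_vec N" and v0: "v \<noteq> 0\<^sub>v N" and ev: "T *\<^sub>v v = lam \<cdot>\<^sub>v v"
    using cT by (auto simp: eigenvector_def T_def)
  have Pv: "P *\<^sub>v (P *\<^sub>v v) = v" using PP cP v
    by (metis assoc_mult_mat_vec one_mult_mat_vec)
  have TPTv: "T *\<^sub>v (P *\<^sub>v (T *\<^sub>v v)) = P *\<^sub>v v"
    using TPT cT cP v by (metis assoc_mult_mat_vec mult_carrier_mat mult_mat_vec_carrier)
  have lam0: "lam \<noteq> 0"
  proof
    assume "lam = 0"
    then have "T *\<^sub>v v = 0\<^sub>v N" using ev v by auto
    then have "P *\<^sub>v v = T *\<^sub>v (P *\<^sub>v 0\<^sub>v N)" using TPTv by simp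
    also have "\<dots> = 0\<^sub>v N" using cP cT by (simp add: mult_zero_vec')
    finally have "P *\<^sub>v v = 0\<^sub>v N" .
    then have "v = P *\<^sub>v 0\<^sub>v N" using Pv by simp
    then have "v = 0\<^sub>v N" using cP by (simp add: mult_zero_vec')
    with v0 show False by simp
  qed
  have w: "P *\<^sub>v v \<in> carrier_vec N" using cP v by simp
  have w0: "P *\<^sub>v v \<noteq> 0\<^sub>v N"
  proof
    assume "P *\<^sub>v v = 0\<^sub>v N"
    then have "v = P *\<^sub>v 0\<^sub>v N" using Pv by simp
    then have "v = 0\<^sub>v N" using cP by (simp add: mult_zero_vec')
    with v0 show False by simp
  qed
  have vv: "v = inverse lam \<cdot>\<^sub>v (T *\<^sub>v v)" using ev lam0 v by (simp add: smult_smult_assoc)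
  have "T *\<^sub>v (P *\<^sub>v v) = T *\<^sub>v (P *\<^sub>v (inverse lam \<cdot>\<^sub>v (T *\<^sub>v v)))" using vv by simp
  also have "\<dots> = inverse lam \<cdot>\<^sub>v (T *\<^sub>v (P *\<^sub>v (T *\<^sub>v v)))"
    using cT cP v by (simp add: mult_mat_vec)
  also have "\<dots> = inverse lam \<cdot>\<^sub>v (P *\<^sub>v v)" using TPTv by simp
  finally show ?thesis unfolding eigenvector_def using w w0 cT
    by (simp add: P_def T_def)
qed

end
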